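(* Let $m$ be a positive integer and consider the equation \[ \cos\tfrac{2\pi j}{m}+\cos\tfrac{2\pi \ell}{m}=2\cos\tfrac{2\pi j}{m}\cos\tfrac{2\pi \ell}{m} \qquad (\ast)\] in unknowns $(j,\ell)\in\{0,\dots,m-1\}^2$. If $4\mid m$, then $(\ast)$ has at least $4$ non-trivial solutions. If $5\mid m$, then $(\ast)$ has at least $8$ non-trivial solutions.
   Context: The solution $(j,\ell)=(0,0)$ of $(\ast)$ is called trivial; all other solutions are non-trivial. *)

theory Defs
  imports Complex_Main
begin

definition sols :: "nat \<Rightarrow> (nat \<times> nat) set" where
  "sols m = {(j, l). j < m \<and> l < m \<and>
     cos (2 * pi * real j / real m) + cos (2 * pi * real l / real m)
       = 2 * cos (2 * pi * real j / real m) * cos (2 * pi * real l / real m)}"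

definition nontrivial_sols :: "nat \<Rightarrow> (nat \<times> nat) set" where
  "nontrivial_sols m = sols m - {(0, 0)}"

end

theory Submission
  imports Defs
begin

lemma fin_ns: "finite (nontrivial_sols m)"
proof -
  have "nontrivial_sols m \<subseteq> {..<m} \<times> {..<m}"
    unfolding nontrivial_sols_def sols_def by auto
  then show ?thesis by (rule finite_subset) auto
qed

lemma key5: "cos (2*pi/5) + cos (4*pi/5) = 2 * cos (2*pi/5) * cos (4*pi/5)"
proof -
  have "2 * cos (2*pi/5) * cos (4*pi/5) = cos (2*pi/5 - 4*pi/5) + cos (2*pi/5 + 4*pi/5)"
    using cos_times_cos[of "2*pi/5" "4*pi/5"] by simp
  also have "2*pi/5 - 4*pi/5 = - (2*pi/5)" by simp
  also have "cos (- (2*pi/5)) = cos (2*pi/5)" by (rule cos_minus)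
  also have "cos (2*pi/5 + 4*pi/5) = cos (2*pi - 4*pi/5)"
    by (rule arg_cong[where f=cos]) simp
  also have "\<dots> = cos (4*pi/5)" by (rule cos_2pi_minus)
  finally show ?thesis by simp
qed

lemma ang: "k > 0 \<Longrightarrow> 2 * pi * real (c * k) / real (d * k) = 2 * pi * real c / real d"
  by (simp add: field_simps)

theorem lemmaA1:
  fixes m :: nat
  assumes "m > 0"
  shows "(4 dvd m \<longrightarrow> card (nontrivial_sols m) \<ge> 4) \<and>
         (5 dvd m \<longrightarrow> card (nontrivial_sols m) \<ge> 8)"
proof (intro conjI impI)
  assume "4 dvd m"
  then obtain k where m: "m = 4 * k" by auto
  with assms have k: "k > 0" by simp
  have c1: "cos (2 * pi * real (1 * k) / real m) = 0"
    unfolding m using ang[OF k, of 1 4] k by simp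
  have c3: "cos (2 * pi * real (3 * k) / real m) = 0"
  proof -
    have "2 * pi * real (3 * k) / real m = 3/2*pi"
      unfolding m using k by (simp add: field_simps)
    then show ?thesis using cos_3over2_pi by metis
  qed
  have S: "{(1*k,1*k),(1*k,3*k),(3*k,1*k),(3*k,3*k)} \<subseteq> nontrivial_sols m"
    unfolding nontrivial_sols_def sols_def
    apply (simp only: insert_subset empty_subsetI Diff_iff mem_Collect_eq prod.case c1 c3)
    using k m by auto
  have "card {(1*k,1*k),(1*k,3*k),(3*k,1*k),(3*k,3*k)} = 4" using k by simp
  then show "card (nontrivial_sols m) \<ge> 4"
    using card_mono[OF fin_ns S] by simp
next
  assume "5 dvd m"
  then obtain k where m: "m = 5 * k" by auto
  with assms have k: "k > 0" by simp
  define a where "a = cos (2*pi/5)"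
  define b where "b = cos (4*pi/5)"
  have c1: "cos (2 * pi * real (1 * k) / real m) = a"
    unfolding m a_def using ang[OF k, of 1 5] k by simp
  have c2: "cos (2 * pi * real (2 * k) / real m) = b"
    unfolding m b_def using ang[OF k, of 2 5] k by simp
  have c3: "cos (2 * pi * real (3 * k) / real m) = b"
  proof -
    have "2 * pi * real (3 * k) / real m = 2*pi - 4*pi/5"
      unfolding m using ang[OF k, of 3 5] k by simp
    then show ?thesis unfolding b_def using cos_2pi_minus by metis
  qed
  have c4: "cos (2 * pi * real (4 * k) / real m) = a"
  proof -
    have "2 * pi * real (4 * k) / real m = 2*pi - 2*pi/5"
      unfolding m using ang[OF k, of 4 5] k by simp
    then show ?thesis unfolding a_def using cos_2pi_minus by metis
  qed
  have e: "a + b = 2 * a * b" "b + a = 2 * b * a"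
    using key5 unfolding a_def b_def by (auto simp: algebra_simps)
  let ?S = "{(1*k,2*k),(1*k,3*k),(4*k,2*k),(4*k,3*k),(2*k,1*k),(3*k,1*k),(2*k,4*k),(3*k,4*k)}"
  have S: "?S \<subseteq> nontrivial_sols m"
    unfolding nontrivial_sols_def sols_def
    apply (simp only: insert_subset empty_subsetI Diff_iff mem_Collect_eq prod.case c1 c2 c3 c4 e)
    using k m by auto
  have "card ?S = 8" using k by simp
  then show "card (nontrivial_sols m) \<ge> 8"
    using card_mono[OF fin_ns S] by simp
qed

end
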